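(* For every $k\in[-\pi,\pi)$, the eigenspace $\{u\in\ell^2(\mathbb Z;\mathbb C^6):\hat H_{\mathrm I}(k)u=0\}$ is even-dimensional.
   Context: Parameters $b_\pm>0$, $\delta_\pm$ with $b_\pm+\delta_\pm>0$, $c>0$. For $n\in\mathbb Z$ let $b_n=b_+$ ($n\ge0$), $b_n=b_-$ ($n\le-1$); $c_n=b_++\delta_+$ ($n\ge0$), $c_{-1}=c$, $c_n=b_-+\delta_-$ ($n\le-2$); $d_n=b_++\delta_+$ ($n\ge0$), $d_n=b_-+\delta_-$ ($n\le-1$). $\hat H_{\mathrm I}(k)$ acts on $u=\{(u_{j,n})_{j=1}^6\}_{n\in\mathbb Z}\in\ell^2(\mathbb Z;\mathbb C^6)$ by $(\hat H_{\mathrm I}(k)u)_{1,n}=-b_nu_{4,n}-b_nu_{5,n}-c_{n-1}e^{-ik}u_{6,n-1}$, $(\hat H_{\mathrm I}(k)u)_{2,n}=-b_nu_{4,n}-d_ne^{ik}u_{5,n}-b_nu_{6,n}$, $(\hat H_{\mathrm I}(k)u)_{3,n}=-c_nu_{4,n+1}-b_nu_{5,n}-b_nu_{6,n}$, $(\hat H_{\mathrm I}(k)u)_{4,n}=-b_nu_{1,n}-b_nu_{2,n}-c_{n-1}u_{3,n-1}$, $(\hat H_{\mathrm I}(k)u)_{5,n}=-b_nu_{1,n}-d_ne^{-ik}u_{2,n}-b_nu_{3,n}$, $(\hat H_{\mathrm I}(k)u)_{6,n}=-c_ne^{ik}u_{1,n+1}-b_nu_{2,n}-b_nu_{3,n}$.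 *)

theory Defs
  imports "HOL-Analysis.Analysis" "HOL-Library.Function_Algebras"
begin

text \<open>Vectors u in l^2(Z; C^6) are represented as functions u :: int => nat => complex,
  u n j being the component u_{j,n}, with j ranging over {1..6} (components outside
  {1..6} are required to vanish).\<close>

type_synonym seq6 = "int \<Rightarrow> nat \<Rightarrow> complex"

definition ell2_6 :: "seq6 set" where
  "ell2_6 = {u. (\<forall>n j. j \<notin> {1..6} \<longrightarrow> u n j = 0) \<and>
                 (\<lambda>n. \<Sum>j\<in>{1..6}. (cmod (u n j))\<^sup>2) summable_on (UNIV :: int set)}"

definition scale6 :: "complex \<Rightarrow> seq6 \<Rightarrow> seq6" where
  "scale6 a u = (\<lambda>n j. a * u n j)"

interpretation s6: vector_space scale6
  by unfold_locales (auto simp: scale6_def fun_eq_iff algebra_simps)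

definition bseq :: "real \<Rightarrow> real \<Rightarrow> int \<Rightarrow> real" where
  "bseq bp bm n = (if n \<ge> 0 then bp else bm)"

definition cseq :: "real \<Rightarrow> real \<Rightarrow> real \<Rightarrow> real \<Rightarrow> real \<Rightarrow> int \<Rightarrow> real" where
  "cseq bp bm dp dm c n = (if n \<ge> 0 then bp + dp else if n = -1 then c else bm + dm)"

definition dseq :: "real \<Rightarrow> real \<Rightarrow> real \<Rightarrow> real \<Rightarrow> int \<Rightarrow> real" where
  "dseq bp bm dp dm n = (if n \<ge> 0 then bp + dp else bm + dm)"

definition HI :: "real \<Rightarrow> real \<Rightarrow> real \<Rightarrow> real \<Rightarrow> real \<Rightarrow> real \<Rightarrow> seq6 \<Rightarrow> seq6" where
  "HI bp bm dp dm c k u = (\<lambda>n j.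
     let b = complex_of_real (bseq bp bm n);
         cn = complex_of_real (cseq bp bm dp dm c n);
         cm = complex_of_real (cseq bp bm dp dm c (n - 1));
         d = complex_of_real (dseq bp bm dp dm n);
         e = cis k
     in if j = 1 then - b * u n 4 - b * u n 5 - cm * inverse e * u (n - 1) 6
        else if j = 2 then - b * u n 4 - d * e * u n 5 - b * u n 6
        else if j = 3 then - cn * u (n + 1) 4 - b * u n 5 - b * u n 6
        else if j = 4 then - b * u n 1 - b * u n 2 - cm * u (n - 1) 3
        else if j = 5 then - b * u n 1 - d * inverse e * u n 2 - b * u n 3
        else if j = 6 then - cn * e * u (n + 1) 1 - b * u n 2 - b * u n 3
        else 0)"

definition kerHI :: "real \<Rightarrow> real \<Rightarrow> real \<Rightarrow> real \<Rightarrow> real \<Rightarrow> real \<Rightarrow> seq6 set" where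
  "kerHI bp bm dp dm c k = {u \<in> ell2_6. HI bp bm dp dm c k u = (\<lambda>n j. 0)}"

end

theory Submission
  imports Defs
begin


lemma sum6: "(\<Sum>j\<in>{1..6::nat}. f j) = f 1 + f 2 + f 3 + f 4 + f 5 + (f 6 :: 'a::comm_monoid_add)"
proof -
  have "{1..6::nat} = {1,2,3,4,5,6}" by auto
  then show ?thesis by (simp add: add.assoc)
qed

lemma sq_add_le: "(cmod (a + b))\<^sup>2 \<le> 2 * (cmod a)\<^sup>2 + 2 * (cmod b)\<^sup>2"
proof -
  have "cmod (a+b) \<le> cmod a + cmod b" by (rule norm_triangle_ineq)
  then have "(cmod (a+b))\<^sup>2 \<le> (cmod a + cmod b)\<^sup>2" by (simp add: power_mono)
  also have "\<dots> \<le> 2 * (cmod a)\<^sup>2 + 2 * (cmod b)\<^sup>2"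
    using sum_squares_ge_zero[of "cmod a - cmod b" 0] by (simp add: power2_eq_square algebra_simps)
  finally show ?thesis .
qed

lemma ell2_add: assumes "u \<in> ell2_6" "v \<in> ell2_6" shows "u + v \<in> ell2_6"
proof -
  let ?f = "\<lambda>u n. \<Sum>j\<in>{1..6}. (cmod ((u::seq6) n j))\<^sup>2"
  have s: "(\<lambda>n. 2 * ?f u n + 2 * ?f v n) summable_on (UNIV::int set)"
    using assms unfolding ell2_6_def
    by (intro summable_on_add summable_on_cmult_right) auto
  have "?f (u+v) summable_on (UNIV::int set)"
  proof (rule summable_on_comparison_test[OF s])
    fix n
    show "?f (u+v) n \<le> 2 * ?f u n + 2 * ?f v n"
      unfolding sum_distrib_left sum.distrib[symmetric]
      by (rule sum_mono) (simp add: plus_fun_def sq_add_le)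
    show "0 \<le> ?f (u+v) n" by (simp add: sum_nonneg)
  qed
  then show ?thesis using assms unfolding ell2_6_def by (auto simp: plus_fun_def)
qed

lemma ell2_scale: assumes "u \<in> ell2_6" shows "scale6 a u \<in> ell2_6"
proof -
  let ?f = "\<lambda>u n. \<Sum>j\<in>{1..6}. (cmod ((u::seq6) n j))\<^sup>2"
  have "(\<lambda>n. (cmod a)\<^sup>2 * ?f u n) summable_on (UNIV::int set)"
    using assms unfolding ell2_6_def by (intro summable_on_cmult_right) auto
  moreover have "(\<lambda>n. (cmod a)\<^sup>2 * ?f u n) = ?f (scale6 a u)"
    by (simp add: fun_eq_iff scale6_def sum_distrib_left norm_mult power_mult_distrib)
  ultimately show ?thesis using assms unfolding ell2_6_def by (auto simp: scale6_def)
qed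

lemma ell2_zero: "(0::seq6) \<in> ell2_6"
  unfolding ell2_6_def by (simp add: summable_on_0)

lemma ell2_dom: assumes "u \<in> ell2_6" "\<And>n j. cmod (v n j) \<le> cmod (u n j)" shows "v \<in> ell2_6"
proof -
  let ?f = "\<lambda>u n. \<Sum>j\<in>{1..6}. (cmod ((u::seq6) n j))\<^sup>2"
  have "?f v summable_on (UNIV::int set)"
  proof (rule summable_on_comparison_test)
    show "?f u summable_on UNIV" using assms unfolding ell2_6_def by auto
    fix n show "?f v n \<le> ?f u n"
      by (rule sum_mono) (simp add: assms(2) power_mono)
    show "0 \<le> ?f v n" by (simp add: sum_nonneg)
  qed
  moreover have "\<forall>n j. j \<notin> {1..6} \<longrightarrow> v n j = 0"
  proof (intro allI impI)
    fix n j assume "j \<notin> {1..6::nat}"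
    then have "u n j = 0" using assms(1) unfolding ell2_6_def by auto
    then show "v n j = 0" using assms(2)[of n j] by simp
  qed
  ultimately show ?thesis unfolding ell2_6_def by auto
qed

lemma ell2_eqnorm: assumes "u \<in> ell2_6" "\<And>n j. j \<notin> {1..6} \<Longrightarrow> v n j = 0"
  "\<And>n. (\<Sum>j\<in>{1..6}. (cmod (v n j))\<^sup>2) = (\<Sum>j\<in>{1..6}. (cmod (u n j))\<^sup>2)"
  shows "v \<in> ell2_6"
  using assms unfolding ell2_6_def by (auto simp: assms(3))



definition Pv :: "seq6 \<Rightarrow> seq6" where "Pv u = (\<lambda>n j. if j \<in> {4,5,6} then u n j else 0)"
definition Pw :: "seq6 \<Rightarrow> seq6" where "Pw u = (\<lambda>n j. if j \<in> {1,2,3} then u n j else 0)"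
definition Jv :: "real \<Rightarrow> seq6 \<Rightarrow> seq6" where
  "Jv k u = (\<lambda>n j. if j \<in> {1,2,3} then cis (- (real_of_int n * k)) * cnj (u n (j+3)) else 0)"
definition Jw :: "real \<Rightarrow> seq6 \<Rightarrow> seq6" where
  "Jw k u = (\<lambda>n j. if j \<in> {4,5,6} then cis (- (real_of_int n * k)) * cnj (u n (j-3)) else 0)"

lemma HI_Pv: "HI bp bm dp dm c k (Pv u) = Pw (HI bp bm dp dm c k u)"
  by (simp add: HI_def Pv_def Pw_def Let_def fun_eq_iff)

lemma HI_Pw: "HI bp bm dp dm c k (Pw u) = Pv (HI bp bm dp dm c k u)"
  by (simp add: HI_def Pv_def Pw_def Let_def fun_eq_iff)

lemma cnj_cis: "cnj (cis x) = cis (-x)" by (simp add: complex_eq_iff)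

lemma lam_m1: "cis (- (real_of_int (n - 1) * k)) = cis (- (real_of_int n * k)) * cis k"
  by (simp add: cis_mult algebra_simps)
lemma lam_p1: "cis (- (real_of_int (n + 1) * k)) = cis (- (real_of_int n * k)) * cis (-k)"
  by (simp add: cis_mult algebra_simps)

lemma HI_Jv: "HI bp bm dp dm c k (Jv k u) = Jw k (HI bp bm dp dm c k u)"
proof -
  have ci: "inverse (cis k) = cis (-k)" by (simp add: cis_inverse)
  have cc: "cis k * cis (-k) = 1" by (simp add: cis_mult)
  show ?thesis
  unfolding fun_eq_iff
  proof (intro allI)
    fix n j
    show "HI bp bm dp dm c k (Jv k u) n j = Jw k (HI bp bm dp dm c k u) n j"
      by (auto simp: HI_def Jv_def Jw_def Let_def lam_m1 lam_p1 ci cnj_cis cis_mult algebra_simps)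
  qed
qed

lemma HI_Jw: "HI bp bm dp dm c k (Jw k u) = Jv k (HI bp bm dp dm c k u)"
proof -
  have ci: "inverse (cis k) = cis (-k)" by (simp add: cis_inverse)
  have cc: "cis k * cis (-k) = 1" by (simp add: cis_mult)
  show ?thesis
  unfolding fun_eq_iff
  proof (intro allI)
    fix n j
    show "HI bp bm dp dm c k (Jw k u) n j = Jv k (HI bp bm dp dm c k u) n j"
      by (auto simp: HI_def Jv_def Jw_def Let_def lam_m1 lam_p1 ci cnj_cis cis_mult algebra_simps)
  qed
qed



definition vpart :: "seq6 \<Rightarrow> bool" where "vpart u \<longleftrightarrow> (\<forall>n j. j \<notin> {4,5,6} \<longrightarrow> u n j = 0)"
definition wpart :: "seq6 \<Rightarrow> bool" where "wpart u \<longleftrightarrow> (\<forall>n j. j \<notin> {1,2,3} \<longrightarrow> u n j = 0)"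

lemma Jv_add: "Jv k (u + v) = Jv k u + Jv k v"
  by (simp add: Jv_def fun_eq_iff plus_fun_def algebra_simps)
lemma Jw_add: "Jw k (u + v) = Jw k u + Jw k v"
  by (simp add: Jw_def fun_eq_iff plus_fun_def algebra_simps)
lemma Jv_scale: "Jv k (scale6 a u) = scale6 (cnj a) (Jv k u)"
  by (simp add: Jv_def fun_eq_iff scale6_def algebra_simps)
lemma Jw_scale: "Jw k (scale6 a u) = scale6 (cnj a) (Jw k u)"
  by (simp add: Jw_def fun_eq_iff scale6_def algebra_simps)
lemma Jv_zero: "Jv k 0 = 0" by (simp add: Jv_def fun_eq_iff)
lemma Jw_zero: "Jw k 0 = 0" by (simp add: Jw_def fun_eq_iff)


lemma Jw_Jv: "vpart u \<Longrightarrow> Jw k (Jv k u) = u"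
  unfolding fun_eq_iff vpart_def
  by (auto simp: Jw_def Jv_def cnj_cis cis_mult mult.assoc[symmetric])
lemma Jv_Jw: "wpart u \<Longrightarrow> Jv k (Jw k u) = u"
  unfolding fun_eq_iff wpart_def
  by (auto simp: Jw_def Jv_def cnj_cis cis_mult mult.assoc[symmetric])

lemma wpart_Jv: "wpart (Jv k u)" by (simp add: wpart_def Jv_def)
lemma vpart_Jw: "vpart (Jw k u)" by (simp add: vpart_def Jw_def)
lemma vpart_Pv: "vpart (Pv u)" by (simp add: vpart_def Pv_def)
lemma wpart_Pw: "wpart (Pw u)" by (simp add: wpart_def Pw_def)

lemma Jv_ell2: assumes "u \<in> ell2_6" "vpart u" shows "Jv k u \<in> ell2_6"
proof (rule ell2_eqnorm[OF assms(1)])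
  show "Jv k u n j = 0" if "j \<notin> {1..6}" for n j using that by (auto simp: Jv_def)
  fix n
  have "u n 1 = 0" "u n 2 = 0" "u n 3 = 0" using assms(2) by (auto simp: vpart_def)
  then show "(\<Sum>j = 1..6. (cmod (Jv k u n j))\<^sup>2) = (\<Sum>j = 1..6. (cmod (u n j))\<^sup>2)"
    unfolding sum6 by (simp add: Jv_def norm_mult)
qed

lemma Jw_ell2: assumes "u \<in> ell2_6" "wpart u" shows "Jw k u \<in> ell2_6"
proof (rule ell2_eqnorm[OF assms(1)])
  show "Jw k u n j = 0" if "j \<notin> {1..6}" for n j using that by (auto simp: Jw_def)
  fix n
  have "u n 4 = 0" "u n 5 = 0" "u n 6 = 0" using assms(2) by (auto simp: wpart_def)
  then show "(\<Sum>j = 1..6. (cmod (Jw k u n j))\<^sup>2) = (\<Sum>j = 1..6. (cmod (u n j))\<^sup>2)"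
    unfolding sum6 by (simp add: Jw_def norm_mult)
qed

lemma Pv_ell2: "u \<in> ell2_6 \<Longrightarrow> Pv u \<in> ell2_6"
  by (rule ell2_dom) (auto simp: Pv_def)
lemma Pw_ell2: "u \<in> ell2_6 \<Longrightarrow> Pw u \<in> ell2_6"
  by (rule ell2_dom) (auto simp: Pw_def)

lemma Pv_Pw: "u \<in> ell2_6 \<Longrightarrow> Pv u + Pw u = u"
  unfolding fun_eq_iff ell2_6_def by (auto simp: Pv_def Pw_def plus_fun_def)

lemma Pv_zero: "Pv 0 = 0" by (simp add: Pv_def fun_eq_iff)
lemma Pw_zero: "Pw 0 = 0" by (simp add: Pw_def fun_eq_iff)

lemma anti_span:
  fixes f :: "seq6 \<Rightarrow> seq6"
  assumes add: "\<And>x y. f (x + y) = f x + f y" and sc: "\<And>a x. f (scale6 a x) = scale6 (cnj a) (f x)"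
  shows "f ` s6.span S \<subseteq> s6.span (f ` S)"
proof -
  have z: "f 0 = 0" using add[of 0 0] by simp
  have "s6.span S \<subseteq> {x. f x \<in> s6.span (f ` S)}"
  proof (rule s6.span_minimal)
    show "S \<subseteq> {x. f x \<in> s6.span (f ` S)}" by (auto intro: s6.span_base)
    show "s6.subspace {x. f x \<in> s6.span (f ` S)}"
      unfolding s6.subspace_def using z add sc
      by (auto intro: s6.span_zero s6.span_add s6.span_scale)
  qed
  then show ?thesis by auto
qed

lemma indep_Un:
  assumes "finite B" "s6.independent A" "s6.independent B"
    "s6.span A \<inter> s6.span B \<subseteq> {0}"
  shows "s6.independent (A \<union> B)"
  using assms
proof (induction B rule: finite_induct)
  case empty then show ?case by simp
next
  case (insert b B)
  have iB: "s6.independent B" using insert.prems(2) s6.independent_mono by blast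
  have bB: "b \<notin> s6.span B"
    using insert.prems(2) insert.hyps(2) by (simp add: s6.independent_insert)
  have "s6.span A \<inter> s6.span B \<subseteq> {0}"
    using insert.prems(3) s6.span_mono[of B "insert b B"] by blast
  then have IH: "s6.independent (A \<union> B)" using insert.IH insert.prems(1) iB by blast
  have "b \<notin> s6.span (A \<union> B)"
  proof
    assume "b \<in> s6.span (A \<union> B)"
    then obtain x y where xy: "b = x + y" "x \<in> s6.span A" "y \<in> s6.span B"
      unfolding s6.span_Un by blast
    have "x = b - y" using xy by simp
    moreover have "b - y \<in> s6.span (insert b B)"
      using xy(3) s6.span_mono[of B "insert b B"]
      by (intro s6.span_diff) (auto intro: s6.span_base)
    ultimately have "x = 0" using insert.prems(3) xy(2) by blast
    then show False using xy bB by simp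
  qed
  then show ?case using IH
    by (metis Un_insert_right insert_absorb s6.independent_insert)
qed



definition Phi :: "seq6 \<Rightarrow> seq6" where
  "Phi u = (\<lambda>n j. if n = 0 \<and> j = 1 then u 0 4 else if n = 0 \<and> j = 2 then u (-1) 6 else 0)"
definition E1 :: seq6 where "E1 = (\<lambda>n j. if n = 0 \<and> j = 1 then 1 else 0)"
definition E2 :: seq6 where "E2 = (\<lambda>n j. if n = 0 \<and> j = 2 then 1 else 0)"

lemma Phi_span: "Phi u \<in> s6.span {E1, E2}"
proof -
  have "Phi u = scale6 (u 0 4) E1 + scale6 (u (-1) 6) E2"
    by (auto simp: fun_eq_iff Phi_def E1_def E2_def scale6_def plus_fun_def)
  then show ?thesis
    by (simp add: s6.span_add s6.span_base s6.span_scale)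
qed

lemma Phi_hom: "module_hom scale6 scale6 Phi"
  apply unfold_locales
  by (auto simp: fun_eq_iff Phi_def scale6_def plus_fun_def)

lemma s6_zero_eq: "(\<lambda>n j. 0) = (0::seq6)" by (simp add: fun_eq_iff)

lemma HI_add: "HI bp bm dp dm c k (u + v) = HI bp bm dp dm c k u + HI bp bm dp dm c k v"
  by (simp add: HI_def Let_def fun_eq_iff plus_fun_def algebra_simps)

lemma HI_scale: "HI bp bm dp dm c k (scale6 a u) = scale6 a (HI bp bm dp dm c k u)"
  by (simp add: HI_def Let_def fun_eq_iff scale6_def algebra_simps)

lemma HI0: "HI bp bm dp dm c k 0 = 0"
  by (simp add: HI_def Let_def fun_eq_iff)

context
  fixes bp bm dp dm c k :: real
  assumes pos: "bp > 0" "bm > 0" "bp + dp > 0" "bm + dm > 0" "c > 0"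
begin

abbreviation "H \<equiv> HI bp bm dp dm c k"
abbreviation "K \<equiv> kerHI bp bm dp dm c k"
definition "Kv = {u \<in> K. vpart u}"
definition "Kw = {u \<in> K. wpart u}"

lemma K_iff: "u \<in> K \<longleftrightarrow> u \<in> ell2_6 \<and> H u = 0"
  by (simp add: kerHI_def s6_zero_eq)

lemma b_pos: "bseq bp bm n > 0" using pos by (simp add: bseq_def)
lemma c_pos: "cseq bp bm dp dm c n > 0" using pos by (simp add: cseq_def)

lemma K_sub: "s6.subspace K"
proof (rule s6.subspaceI)
  show "0 \<in> K" unfolding K_iff by (simp add: ell2_zero HI0)
  fix x y assume "x \<in> K" "y \<in> K"
  then show "x + y \<in> K" unfolding K_iff by (simp add: ell2_add HI_add)
next
  fix a x assume "x \<in> K"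
  moreover have "scale6 a (0::seq6) = 0" by (simp add: scale6_def fun_eq_iff)
  ultimately show "scale6 a x \<in> K" unfolding K_iff
    by (simp only: ell2_scale HI_scale)
qed

lemma Kv_sub: "s6.subspace Kv"
  using K_sub unfolding s6.subspace_def Kv_def vpart_def
  by (auto simp: scale6_def plus_fun_def)

lemma Kw_sub: "s6.subspace Kw"
  using K_sub unfolding s6.subspace_def Kw_def wpart_def
  by (auto simp: scale6_def plus_fun_def)

lemma Pv_K: "u \<in> K \<Longrightarrow> Pv u \<in> Kv"
  unfolding Kv_def K_iff by (simp add: Pv_ell2 HI_Pv Pw_zero vpart_Pv)
lemma Pw_K: "u \<in> K \<Longrightarrow> Pw u \<in> Kw"
  unfolding Kw_def K_iff by (simp add: Pw_ell2 HI_Pw Pv_zero wpart_Pw)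
lemma Jv_K: "u \<in> Kv \<Longrightarrow> Jv k u \<in> Kw"
  unfolding Kv_def Kw_def K_iff by (simp add: Jv_ell2 HI_Jv Jw_zero wpart_Jv)
lemma Jw_K: "u \<in> Kw \<Longrightarrow> Jw k u \<in> Kv"
  unfolding Kv_def Kw_def K_iff by (simp add: Jw_ell2 HI_Jw Jv_zero vpart_Jw)

lemma KvKw: assumes "x \<in> Kv" "x \<in> Kw" shows "x = 0"
proof -
  have "x n j = 0" for n j
  proof (cases "j \<in> {4,5,6}")
    case True then show ?thesis using assms(2) unfolding Kw_def wpart_def by auto
  next
    case False then show ?thesis using assms(1) unfolding Kv_def vpart_def by auto
  qed
  then show ?thesis by (simp add: fun_eq_iff)
qed

lemma uniq: assumes "u \<in> Kv" "u 0 4 = 0" "u (-1) 6 = 0" shows "u = 0"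
proof -
  define B where "B n = complex_of_real (bseq bp bm n)" for n
  define C where "C n = complex_of_real (cseq bp bm dp dm c n)" for n
  define D where "D n = complex_of_real (dseq bp bm dp dm n)" for n
  have B0: "B n \<noteq> 0" for n using b_pos[of n] by (simp add: B_def)
  have C0: "C n \<noteq> 0" for n using c_pos[of n] by (simp add: C_def)
  have e0: "inverse (cis k) \<noteq> 0" by simp
  have Hu: "H u n j = 0" for n j using assms(1) unfolding Kv_def K_iff by simp
  have e1: "- B n * u n 4 - B n * u n 5 - C (n - 1) * inverse (cis k) * u (n - 1) 6 = 0" for n
    using Hu[of n 1] by (simp add: HI_def Let_def B_def C_def)
  have e2: "- B n * u n 4 - D n * cis k * u n 5 - B n * u n 6 = 0" for n
    using Hu[of n 2] by (simp add: HI_def Let_def B_def D_def)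
  have e3: "- C n * u (n + 1) 4 - B n * u n 5 - B n * u n 6 = 0" for n
    using Hu[of n 3] by (simp add: HI_def Let_def B_def C_def)
  have P: "u n 4 = 0 \<and> u (n - 1) 6 = 0" for n
  proof (induction n rule: int_induct[where k = 0])
    case base then show ?case using assms by simp
  next
    case (step1 i)
    then have a: "u i 4 = 0" "u (i - 1) 6 = 0" by auto
    have "u i 5 = 0" using e1[of i] a B0[of i] by simp
    moreover have "u i 6 = 0" using e2[of i] a \<open>u i 5 = 0\<close> B0[of i] by simp
    moreover have "u (i + 1) 4 = 0" using e3[of i] \<open>u i 5 = 0\<close> \<open>u i 6 = 0\<close> C0[of i] by simp
    ultimately show ?case by simp
  next
    case (step2 i)
    then have a: "u (i - 1 + 1) 4 = 0" "u (i - 1) 6 = 0" by auto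
    have "u (i - 1) 5 = 0" using e3[of "i - 1"] a B0[of "i - 1"] by simp
    moreover have "u (i - 1) 4 = 0" using e2[of "i - 1"] a \<open>u (i - 1) 5 = 0\<close> B0[of "i - 1"] by simp
    moreover have "u (i - 1 - 1) 6 = 0"
      using e1[of "i - 1"] \<open>u (i - 1) 5 = 0\<close> \<open>u (i - 1) 4 = 0\<close> C0[of "i - 1 - 1"] e0 by simp
    ultimately show ?case by simp
  qed
  have "u n j = 0" for n j
  proof -
    have 4: "u n 4 = 0" and 6: "u n 6 = 0" using P[of n] P[of "n + 1"] by auto
    have 5: "u n 5 = 0" using e1[of n] 4 P[of n] B0[of n] by simp
    have v: "\<forall>n j. j \<notin> {4,5,6} \<longrightarrow> u n j = 0" using assms(1) unfolding Kv_def vpart_def by auto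
    show ?thesis
    proof (cases "j \<in> {4,5,6}")
      case True then show ?thesis using 4 5 6 by auto
    next
      case False then show ?thesis using v by blast
    qed
  qed
  then show ?thesis by (simp add: fun_eq_iff)
qed

lemma Kv_K: "Kv \<subseteq> K" and Kw_K: "Kw \<subseteq> K" by (auto simp: Kv_def Kw_def)

lemma main: "(\<exists>B. finite B \<and> s6.span B = K) \<and> even (s6.dim K)"
proof -
  obtain Bv where Bv: "Bv \<subseteq> Kv" "s6.independent Bv" "Kv \<subseteq> s6.span Bv"
    by (meson s6.basis_exists)
  have spBv: "s6.span Bv \<subseteq> Kv" using s6.span_minimal[OF Bv(1) Kv_sub] .
  have injKv: "inj_on Phi Kv"
  proof (rule inj_onI)
    fix x y assume xy: "x \<in> Kv" "y \<in> Kv" "Phi x = Phi y"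
    have d: "x - y \<in> Kv" using s6.subspace_diff[OF Kv_sub xy(1,2)] .
    have "Phi x 0 1 = Phi y 0 1" "Phi x 0 2 = Phi y 0 2" using xy(3) by auto
    then have "x 0 4 = y 0 4" "x (-1) 6 = y (-1) 6" by (auto simp: Phi_def)
    then have "(x - y) 0 4 = 0" "(x - y) (-1) 6 = 0" by auto
    then have "x - y = 0" using uniq[OF d] by blast
    then show "x = y" by simp
  qed
  interpret Ph: module_hom scale6 scale6 Phi by (rule Phi_hom)
  have "s6.independent (Phi ` Bv)"
    using Ph.independent_injective_image[OF Bv(2) inj_on_subset[OF injKv spBv]] .
  moreover have "Phi ` Bv \<subseteq> s6.span {E1, E2}" using Phi_span by auto
  ultimately have "finite (Phi ` Bv)" using s6.independent_span_bound[of "{E1,E2}" "Phi ` Bv"] by auto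
  then have fBv: "finite Bv" using finite_imageD inj_on_subset[OF injKv Bv(1)] by blast
  have KwJ: "Kw \<subseteq> s6.span (Jv k ` Bv)"
  proof
    fix w assume w: "w \<in> Kw"
    have "Jw k w \<in> s6.span Bv" using Jw_K[OF w] Bv(3) by auto
    moreover have "w = Jv k (Jw k w)" using w by (simp add: Kw_def Jv_Jw)
    ultimately have "w \<in> Jv k ` s6.span Bv" by blast
    then show "w \<in> s6.span (Jv k ` Bv)" using anti_span[of "Jv k", OF Jv_add Jv_scale] by blast
  qed
  obtain Bw where Bw: "Bw \<subseteq> Kw" "s6.independent Bw" "Kw \<subseteq> s6.span Bw"
    by (meson s6.basis_exists)
  have spBw: "s6.span Bw \<subseteq> Kw" using s6.span_minimal[OF Bw(1) Kw_sub] .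
  have "finite Bw \<and> card Bw \<le> card (Jv k ` Bv)"
    using s6.independent_span_bound[OF finite_imageI[OF fBv] Bw(2)] Bw(1) KwJ by auto
  then have fBw: "finite Bw" and c1: "card Bw \<le> card Bv"
    using card_image_le[OF fBv, of "Jv k"] by auto
  have KvJ: "Kv \<subseteq> s6.span (Jw k ` Bw)"
  proof
    fix w assume w: "w \<in> Kv"
    have "Jv k w \<in> s6.span Bw" using Jv_K[OF w] Bw(3) by auto
    moreover have "w = Jw k (Jv k w)" using w by (simp add: Kv_def Jw_Jv)
    ultimately have "w \<in> Jw k ` s6.span Bw" by blast
    then show "w \<in> s6.span (Jw k ` Bw)" using anti_span[of "Jw k", OF Jw_add Jw_scale] by blast
  qed
  have "card Bv \<le> card (Jw k ` Bw)"
    using s6.independent_span_bound[OF finite_imageI[OF fBw] Bv(2)] Bv(1) KvJ by auto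
  then have c2: "card Bv \<le> card Bw" using card_image_le[OF fBw, of "Jw k"] by auto
  define B where "B = Bv \<union> Bw"
  have iB: "s6.independent B" unfolding B_def
  proof (rule indep_Un[OF fBw Bv(2) Bw(2)])
    show "s6.span Bv \<inter> s6.span Bw \<subseteq> {0}" using spBv spBw KvKw by blast
  qed
  have BK: "B \<subseteq> K" unfolding B_def using Bv(1) Bw(1) Kv_K Kw_K by blast
  have KB: "K \<subseteq> s6.span B"
  proof
    fix u assume u: "u \<in> K"
    have "Pv u \<in> s6.span B" using Pv_K[OF u] Bv(3) s6.span_mono[of Bv B] unfolding B_def by blast
    moreover have "Pw u \<in> s6.span B" using Pw_K[OF u] Bw(3) s6.span_mono[of Bw B] unfolding B_def by blast
    moreover have "Pv u + Pw u = u" using u by (simp add: K_iff Pv_Pw)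
    ultimately show "u \<in> s6.span B" using s6.span_add by metis
  qed
  have spB: "s6.span B = K" using s6.span_subspace[OF BK KB K_sub] .
  have disj: "Bv \<inter> Bw = {}"
  proof (rule ccontr)
    assume "Bv \<inter> Bw \<noteq> {}"
    then obtain x where "x \<in> Bv" "x \<in> Bw" by blast
    then have "x = 0" using Bv(1) Bw(1) KvKw by blast
    then show False using \<open>x \<in> Bv\<close> Bv(2) s6.dependent_zero by blast
  qed
  have "s6.dim K = card B" using s6.dim_unique[OF BK KB iB refl] .
  also have "\<dots> = card Bv + card Bw" unfolding B_def using card_Un_disjoint[OF fBv fBw disj] .
  also have "\<dots> = 2 * card Bv" using c1 c2 by simp
  finally have "even (s6.dim K)" by simp
  moreover have "finite B" using fBv fBw B_def by simp
  ultimately show ?thesis using spB by blast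
qed

end

theorem proposition2:
  fixes bp bm dp dm c k :: real
  assumes "bp > 0" and "bm > 0" and "bp + dp > 0" and "bm + dm > 0" and "c > 0"
    and "k \<in> {-pi..<pi}"
  shows "(\<exists>B. finite B \<and> s6.span B = kerHI bp bm dp dm c k)
         \<and> even (s6.dim (kerHI bp bm dp dm c k))"
  using main[OF assms(1-5)] .


end
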